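(* Let $n\ge2$ and $T\subset\mathbb{N}$. If $\mathcal{P}_T$ is a PULB-space for dimension $n$, then the quadrature rule in condition (i) of the definition of PULB-space is unique; i.e., any two quadrature rules with nodes in $[-1,1]$ and positive weights that are exact on $\mathcal{P}_T$ and satisfy condition (ii) have the same nodes and the same weights.
   Context: $d\mu_n(t)=\gamma_n(1-t^2)^{(n-3)/2}dt$ is the probability measure on $[-1,1]$ with this density; $P_i^{(n)}$ is the Gegenbauer polynomial of degree $i$ (Jacobi with $\alpha=\beta=(n-3)/2$, normalized $P_i^{(n)}(1)=1$). $\mathcal{P}_T=\mathrm{span}\{P_i^{(n)}:i\in T\cup\{0\}\}$. A function $h:[-1,1]\to[0,+\infty]$, continuous on $[-1,1]$ and finite on $[-1,1)$, is absolutely monotone if $h^{(j)}(t)\ge0$ for all $j\ge0$, $t\in[-1,1)$. $\mathcal{L}(n,T,h)=\{f\in\mathcal{P}_T: f\le h\text{ on }[-1,1]\}$. A quadrature rule exact on $\mathcal{P}_T$ consists of nodes $\{\alpha_i\}\subset[-1,1]$ and weights $\{\rho_i\}\subset(0,1)$ with $\int_{-1}^1f\,d\mu_n=\sum_i\rho_if(\alpha_i)$ for all $f\in\mathcal{P}_T$. $\mathcal{P}_T$ is a PULB-space for dimension $n$ if (i) there is a quadrature rule with positive weights exact on $\mathcal{P}_T$ and (ii) for every absolutely monotone $h$ some $f\in\mathcal{L}(n,T,h)$ agrees with $h$ at the nodes of that rule. *)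

theory Defs
  imports "HOL-Analysis.Analysis" "HOL-Library.Extended_Real"
begin

text \<open>Normalized Gegenbauer polynomials P_i^{(n)} (Jacobi with alpha = beta = (n-3)/2,
  normalized so that P_i^{(n)}(1) = 1), given by the standard three-term recurrence
  (i + n - 2) P_{i+1} = (2i + n - 2) t P_i - i P_{i-1}, P_0 = 1, P_1 = t.\<close>
fun gegenbauer :: "nat \<Rightarrow> nat \<Rightarrow> real \<Rightarrow> real" where
  "gegenbauer n 0 t = 1"
| "gegenbauer n (Suc 0) t = t"
| "gegenbauer n (Suc (Suc i)) t =
     ((2 * real (Suc i) + real n - 2) * t * gegenbauer n (Suc i) t
       - real (Suc i) * gegenbauer n i t) / (real (Suc i) + real n - 2)"

definition mu_density :: "nat \<Rightarrow> real \<Rightarrow> real" where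
  "mu_density n t = (1 - t\<^sup>2) powr ((real n - 3) / 2)"

definition gamma_const :: "nat \<Rightarrow> real" where
  "gamma_const n = 1 / (LINT t:{-1..1}|lborel. mu_density n t)"

definition mu_integral :: "nat \<Rightarrow> (real \<Rightarrow> real) \<Rightarrow> real" where
  "mu_integral n f = gamma_const n * (LINT t:{-1..1}|lborel. mu_density n t * f t)"

definition P_space :: "nat \<Rightarrow> nat set \<Rightarrow> (real \<Rightarrow> real) set" where
  "P_space n T = {f. \<exists>S c. finite S \<and> S \<subseteq> T \<union> {0} \<and>
                     f = (\<lambda>t. \<Sum>i\<in>S. c i * gegenbauer n i t)}"

definition abs_monotone :: "(real \<Rightarrow> ereal) \<Rightarrow> bool" where
  "abs_monotone h \<longleftrightarrow>
     continuous_on {-1..1} h \<and>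
     (\<forall>t\<in>{-1..1}. 0 \<le> h t) \<and>
     (\<forall>t\<in>{-1..<1}. h t \<noteq> \<infinity>) \<and>
     (\<exists>D :: nat \<Rightarrow> real \<Rightarrow> real.
        (\<forall>t\<in>{-1..<1}. D 0 t = real_of_ereal (h t)) \<and>
        (\<forall>j. \<forall>t\<in>{-1..<1}.
            (D j has_real_derivative D (Suc j) t) (at t within {-1..<1}) \<and> 0 \<le> D j t))"

definition L_set :: "nat \<Rightarrow> nat set \<Rightarrow> (real \<Rightarrow> ereal) \<Rightarrow> (real \<Rightarrow> real) set" where
  "L_set n T h = {f \<in> P_space n T. \<forall>t\<in>{-1..1}. ereal (f t) \<le> h t}"

definition quadrature_rule :: "nat \<Rightarrow> nat set \<Rightarrow> real set \<Rightarrow> (real \<Rightarrow> real) \<Rightarrow> bool" where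
  "quadrature_rule n T A \<rho> \<longleftrightarrow>
     finite A \<and> A \<subseteq> {-1..1} \<and> (\<forall>a\<in>A. 0 < \<rho> a \<and> \<rho> a < 1) \<and>
     (\<forall>f\<in>P_space n T. mu_integral n f = (\<Sum>a\<in>A. \<rho> a * f a))"

definition interpolation_condition :: "nat \<Rightarrow> nat set \<Rightarrow> real set \<Rightarrow> bool" where
  "interpolation_condition n T A \<longleftrightarrow>
     (\<forall>h. abs_monotone h \<longrightarrow> (\<exists>f\<in>L_set n T h. \<forall>a\<in>A. ereal (f a) = h a))"

definition PULB_rule :: "nat \<Rightarrow> nat set \<Rightarrow> real set \<Rightarrow> (real \<Rightarrow> real) \<Rightarrow> bool" where
  "PULB_rule n T A \<rho> \<longleftrightarrow> quadrature_rule n T A \<rho> \<and> interpolation_condition n T A"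

definition PULB_space :: "nat \<Rightarrow> nat set \<Rightarrow> bool" where
  "PULB_space n T \<longleftrightarrow> (\<exists>A \<rho>. PULB_rule n T A \<rho>)"

end

theory Submission
  imports Defs "HOL-Computational_Algebra.Polynomial"
begin

definition Dk :: "nat \<Rightarrow> nat \<Rightarrow> real \<Rightarrow> real" where
  "Dk k j t = (if j \<le> k then fact k / fact (k - j) * (1 + t) ^ (k - j) else 0)"

lemma Dk_deriv: "(Dk k j has_real_derivative Dk k (Suc j) t) (at t within S)"
proof (cases "j < k")
  case True
  have f: "fact (k - j) = real (k - j) * (fact (k - Suc j) :: real)"
    using fact_reduce[of "k - j"] True by (simp add: Suc_diff_Suc del: of_nat_diff)
  have "((\<lambda>t. fact k / fact (k - j) * (1 + t) ^ (k - j)) has_real_derivative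
        fact k / fact (k - j) * (real (k - j) * (1 + t) ^ (k - j - 1))) (at t within S)"
    by (auto intro!: derivative_eq_intros)
  moreover have "fact k / fact (k - j) * (real (k - j) * (1 + t) ^ (k - j - 1))
     = (fact k / fact (k - Suc j) * (1 + t) ^ (k - Suc j) :: real)"
    using True by (simp add: f field_simps)
  ultimately show ?thesis using True unfolding Dk_def
    by (simp add: Suc_leI less_imp_le)
next
  case False
  then show ?thesis unfolding Dk_def
    by (cases "j = k") (auto intro!: derivative_eq_intros)
qed

lemma absmono_pow: "abs_monotone (\<lambda>t. ereal ((1 + t) ^ k))"
  unfolding abs_monotone_def
proof (intro conjI)
  show "continuous_on {-1..1} (\<lambda>t. ereal ((1 + t) ^ k))"
    by (intro continuous_intros)
  show "\<forall>t\<in>{-1..1}. 0 \<le> ereal ((1 + t) ^ k)" by auto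
  show "\<forall>t\<in>{-1..<1}. ereal ((1 + t) ^ k) \<noteq> \<infinity>" by auto
  show "\<exists>D. (\<forall>t\<in>{- 1..<1}. D 0 t = real_of_ereal (ereal ((1 + t) ^ k))) \<and>
        (\<forall>j. \<forall>t\<in>{- 1..<1}. (D j has_real_derivative D (Suc j) t) (at t within {- 1..<1}) \<and> 0 \<le> D j t)"
    by (rule exI[of _ "Dk k"]) (auto simp: Dk_deriv, auto simp: Dk_def)
qed

lemma sum_ineq:
  assumes r1: "PULB_rule n T A1 \<rho>1" and r2: "PULB_rule n T A2 \<rho>2"
  shows "(\<Sum>a\<in>A1. \<rho>1 a * (1 + a) ^ k) \<le> (\<Sum>a\<in>A2. \<rho>2 a * (1 + a) ^ k)"
proof -
  from r1 have "interpolation_condition n T A1" by (simp add: PULB_rule_def)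
  then obtain f where f: "f \<in> L_set n T (\<lambda>t. ereal ((1 + t) ^ k))"
      and fa: "\<forall>a\<in>A1. ereal (f a) = ereal ((1 + a) ^ k)"
    using absmono_pow[of k] unfolding interpolation_condition_def by blast
  from f have fP: "f \<in> P_space n T" and fle: "\<forall>t\<in>{-1..1}. f t \<le> (1 + t) ^ k"
    by (auto simp: L_set_def)
  have q1: "quadrature_rule n T A1 \<rho>1" and q2: "quadrature_rule n T A2 \<rho>2"
    using r1 r2 by (auto simp: PULB_rule_def)
  have "(\<Sum>a\<in>A1. \<rho>1 a * (1 + a) ^ k) = (\<Sum>a\<in>A1. \<rho>1 a * f a)"
    using fa by (intro sum.cong) auto
  also have "\<dots> = mu_integral n f" using q1 fP by (simp add: quadrature_rule_def)
  also have "\<dots> = (\<Sum>a\<in>A2. \<rho>2 a * f a)" using q2 fP by (simp add: quadrature_rule_def)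
  also have "\<dots> \<le> (\<Sum>a\<in>A2. \<rho>2 a * (1 + a) ^ k)"
  proof (rule sum_mono)
    fix a assume "a \<in> A2"
    then have "a \<in> {-1..1}" "0 < \<rho>2 a" using q2 by (auto simp: quadrature_rule_def)
    then show "\<rho>2 a * f a \<le> \<rho>2 a * (1 + a) ^ k" using fle by (simp)
  qed
  finally show ?thesis .
qed

lemma restrict_sum:
  fixes r g :: "real \<Rightarrow> real"
  assumes "finite S" "A \<subseteq> S"
  shows "(\<Sum>a\<in>S. (if a \<in> A then r a else 0) * g a) = (\<Sum>a\<in>A. r a * g a)"
proof -
  have "(\<Sum>a\<in>S. (if a \<in> A then r a else 0) * g a) = (\<Sum>a\<in>S. if a \<in> A then r a * g a else 0)"
    by (intro sum.cong) simp_all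
  also have "\<dots> = (\<Sum>a\<in>S \<inter> A. r a * g a)" by (simp add: sum.inter_restrict assms)
  also have "S \<inter> A = A" using assms by blast
  finally show ?thesis .
qed

lemma vanish:
  fixes w :: "real \<Rightarrow> real"
  assumes S: "finite S" and z: "\<And>k. (\<Sum>a\<in>S. w a * (1 + a) ^ k) = 0" and a0: "a0 \<in> S"
  shows "w a0 = 0"
proof -
  define q where "q = (\<Prod>b\<in>S - {a0}. [:-(1 + b), 1:])"
  have pq: "poly q x = (\<Prod>b\<in>S - {a0}. x - (1 + b))" for x
    unfolding q_def poly_prod by (intro prod.cong) auto
  have "(\<Sum>a\<in>S. w a * poly q (1 + a)) = (\<Sum>a\<in>S. \<Sum>i\<le>degree q. coeff q i * (w a * (1 + a) ^ i))"
    by (simp add: poly_altdef sum_distrib_left mult_ac)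
  also have "\<dots> = (\<Sum>i\<le>degree q. coeff q i * (\<Sum>a\<in>S. w a * (1 + a) ^ i))"
    by (subst sum.swap) (simp add: sum_distrib_left)
  also have "\<dots> = 0" using z by simp
  finally have A: "(\<Sum>a\<in>S. w a * poly q (1 + a)) = 0" .
  have "(\<Sum>a\<in>S. w a * poly q (1 + a)) = w a0 * poly q (1 + a0)"
  proof (rule sum.remove[OF S a0, THEN trans])
    have "(\<Sum>a\<in>S - {a0}. w a * poly q (1 + a)) = 0"
    proof (rule sum.neutral, intro ballI)
      fix a assume "a \<in> S - {a0}"
      then have "poly q (1 + a) = 0" unfolding pq using S
        by (intro prod_zero) auto
      then show "w a * poly q (1 + a) = 0" by simp
    qed
    then show "w a0 * poly q (1 + a0) + (\<Sum>a\<in>S - {a0}. w a * poly q (1 + a)) = w a0 * poly q (1 + a0)"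
      by simp
  qed
  moreover have "poly q (1 + a0) \<noteq> 0" unfolding pq using S
    by (subst prod_zero_iff) auto
  ultimately show ?thesis using A by simp
qed

theorem corollary4p9:
  fixes n :: nat and T :: "nat set"
    and A1 A2 :: "real set" and \<rho>1 \<rho>2 :: "real \<Rightarrow> real"
  assumes "n \<ge> 2"
    and "PULB_space n T"
    and "PULB_rule n T A1 \<rho>1"
    and "PULB_rule n T A2 \<rho>2"
  shows "A1 = A2 \<and> (\<forall>a\<in>A1. \<rho>1 a = \<rho>2 a)"
proof -
  have q1: "quadrature_rule n T A1 \<rho>1" and q2: "quadrature_rule n T A2 \<rho>2"
    using assms by (auto simp: PULB_rule_def)
  have F1: "finite A1" and F2: "finite A2" and P1: "\<forall>a\<in>A1. 0 < \<rho>1 a" and P2: "\<forall>a\<in>A2. 0 < \<rho>2 a"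
    using q1 q2 by (auto simp: quadrature_rule_def)
  define S where "S = A1 \<union> A2"
  have S: "finite S" using F1 F2 by (simp add: S_def)
  define w where "w a = (if a \<in> A1 then \<rho>1 a else 0) - (if a \<in> A2 then \<rho>2 a else 0)" for a
  have z: "(\<Sum>a\<in>S. w a * (1 + a) ^ k) = 0" for k
  proof -
    have e: "(\<Sum>a\<in>A1. \<rho>1 a * (1 + a) ^ k) = (\<Sum>a\<in>A2. \<rho>2 a * (1 + a) ^ k)"
      using sum_ineq[OF assms(3,4), of k] sum_ineq[OF assms(4,3), of k] by linarith
    have "(\<Sum>a\<in>S. w a * (1 + a) ^ k) =
       (\<Sum>a\<in>S. (if a \<in> A1 then \<rho>1 a else 0) * (1 + a) ^ k) -
       (\<Sum>a\<in>S. (if a \<in> A2 then \<rho>2 a else 0) * (1 + a) ^ k)"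
      unfolding w_def by (simp add: left_diff_distrib sum_subtractf)
    also have "\<dots> = 0" using e S
      by (simp add: restrict_sum S_def)
    finally show ?thesis .
  qed
  have w0: "w a = 0" if "a \<in> S" for a using vanish[OF S z that] .
  have "A1 \<subseteq> A2"
  proof
    fix a assume "a \<in> A1"
    then show "a \<in> A2" using w0[of a] P1 by (auto simp: S_def w_def split: if_splits)
  qed
  moreover have "A2 \<subseteq> A1"
  proof
    fix a assume "a \<in> A2"
    then show "a \<in> A1" using w0[of a] P2 by (auto simp: S_def w_def split: if_splits)
  qed
  moreover have "\<forall>a\<in>A1. \<rho>1 a = \<rho>2 a"
  proof
    fix a assume a: "a \<in> A1"
    then have "a \<in> A2" using \<open>A1 \<subseteq> A2\<close> by blast
    then show "\<rho>1 a = \<rho>2 a" using w0[of a] a by (simp add: S_def w_def)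
  qed
  ultimately show ?thesis by blast
qed

end
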